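(* Let $T>0$ and $\beta\in\mathbb{R}$ with $|\beta|<\frac{1}{2T}$. Then the boundary value problem $$\left(\frac{u'}{\sqrt{1+u'^2}}\right)'=\beta\cos u\ \text{on }[0,T],\qquad u(0)=u(T)=u'(T)$$ has at least one solution.
   Context: A solution is a function $u\in C^1([0,T],\mathbb{R})$ satisfying the boundary conditions such that $t\mapsto u'(t)/\sqrt{1+u'(t)^2}$ is continuously differentiable and the equation holds for all $t\in[0,T]$. *)

theory Defs
  imports "HOL-Analysis.Analysis"
begin

definition is_solution :: "real \<Rightarrow> real \<Rightarrow> (real \<Rightarrow> real) \<Rightarrow> bool" where
  "is_solution T \<beta> u \<longleftrightarrow>
     (\<exists>du dphi.
        continuous_on {0..T} du \<and>
        (\<forall>t\<in>{0..T}. (u has_real_derivative du t) (at t within {0..T})) \<and>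
        continuous_on {0..T} dphi \<and>
        (\<forall>t\<in>{0..T}. ((\<lambda>s. du s / sqrt (1 + (du s)\<^sup>2)) has_real_derivative dphi t)
                        (at t within {0..T})) \<and>
        (\<forall>t\<in>{0..T}. dphi t = \<beta> * cos (u t)) \<and>
        u 0 = u T \<and> u T = du T)"

end

theory Submission
  imports Defs
begin


definition gg :: "real \<Rightarrow> real" where "gg x = x / sqrt (1 - x\<^sup>2)"

lemma gg_deriv:
  assumes "\<bar>x\<bar> < 1"
  shows "(gg has_real_derivative (1 / ((1 - x\<^sup>2) * sqrt (1 - x\<^sup>2)))) (at x)"
proof -
  have p: "1 - x\<^sup>2 > 0" using assms by (simp add: abs_square_less_1)
  have s: "sqrt (1 - x\<^sup>2) > 0" using p by simp
  have d1: "((\<lambda>x. 1 - x\<^sup>2) has_real_derivative (- (2 * x))) (at x)"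
    by (auto intro!: derivative_eq_intros)
  have d2: "((\<lambda>x. sqrt (1 - x\<^sup>2)) has_real_derivative (inverse (sqrt (1 - x\<^sup>2)) / 2 * (- (2 * x)))) (at x)"
    using DERIV_chain2[OF DERIV_real_sqrt[OF p] d1] .
  have d3: "((\<lambda>x. x / sqrt (1 - x\<^sup>2)) has_real_derivative
     ((1 * sqrt (1 - x\<^sup>2) - (inverse (sqrt (1 - x\<^sup>2)) / 2 * (- (2 * x))) * x) / (sqrt (1 - x\<^sup>2))\<^sup>2)) (at x)"
    using DERIV_quotient[OF DERIV_ident d2] s by simp
  have e: "(1 * sqrt (1 - x\<^sup>2) - (inverse (sqrt (1 - x\<^sup>2)) / 2 * (- (2 * x))) * x) / (sqrt (1 - x\<^sup>2))\<^sup>2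
     = 1 / ((1 - x\<^sup>2) * sqrt (1 - x\<^sup>2))"
    using p s by (simp add: field_simps) (simp add: power2_eq_square field_simps)
  show ?thesis unfolding gg_def using d3 e by simp
qed

lemma phi_gg:
  assumes "\<bar>x\<bar> < 1"
  shows "gg x / sqrt (1 + (gg x)\<^sup>2) = x"
proof -
  have p: "1 - x\<^sup>2 > 0" using assms by (simp add: abs_square_less_1)
  have "1 + (gg x)\<^sup>2 = 1 / (1 - x\<^sup>2)" unfolding gg_def using p
    by (simp add: power_divide field_simps)
  then have "sqrt (1 + (gg x)\<^sup>2) = 1 / sqrt (1 - x\<^sup>2)" by (simp add: real_sqrt_divide)
  then show ?thesis unfolding gg_def using p by simp
qed

definition Lr :: "real \<Rightarrow> real" where "Lr r = 1 / ((1 - r\<^sup>2) * sqrt (1 - r\<^sup>2))"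

lemma deriv_bound:
  assumes "0 \<le> r" "r < 1" "\<bar>z\<bar> \<le> r"
  shows "\<bar>1 / ((1 - z\<^sup>2) * sqrt (1 - z\<^sup>2))\<bar> \<le> Lr r"
proof -
  have z2: "z\<^sup>2 \<le> r\<^sup>2" using assms by (metis abs_ge_zero power2_abs power_mono)
  have r2: "r\<^sup>2 < 1" using assms by (simp add: power_less_one_iff abs_square_less_1)
  have p: "0 < 1 - r\<^sup>2" using r2 by simp
  have a1: "1 - r\<^sup>2 \<le> 1 - z\<^sup>2" using z2 by simp
  have a2: "sqrt (1 - r\<^sup>2) \<le> sqrt (1 - z\<^sup>2)" using a1 by simp
  have ps: "0 < sqrt (1 - r\<^sup>2)" using p by simp
  have "(1 - r\<^sup>2) * sqrt (1 - r\<^sup>2) \<le> (1 - z\<^sup>2) * sqrt (1 - z\<^sup>2)"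
    using a1 a2 p ps by (intro mult_mono) auto
  moreover have "0 < (1 - r\<^sup>2) * sqrt (1 - r\<^sup>2)" using p ps by simp
  ultimately have "1 / ((1 - z\<^sup>2) * sqrt (1 - z\<^sup>2)) \<le> Lr r"
    unfolding Lr_def by (intro divide_left_mono) auto
  moreover have "0 < (1 - z\<^sup>2) * sqrt (1 - z\<^sup>2)" using \<open>0 < (1 - r\<^sup>2) * sqrt (1 - r\<^sup>2)\<close>
      \<open>(1 - r\<^sup>2) * sqrt (1 - r\<^sup>2) \<le> (1 - z\<^sup>2) * sqrt (1 - z\<^sup>2)\<close> by linarith
  ultimately show ?thesis by simp
qed

lemma gg_lip_aux:
  assumes "0 \<le> r" "r < 1" "\<bar>x\<bar> \<le> r" "\<bar>y\<bar> \<le> r" "x < y"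
  shows "\<bar>gg y - gg x\<bar> \<le> Lr r * \<bar>y - x\<bar>"
proof -
  have "\<exists>z. x < z \<and> z < y \<and> gg y - gg x = (y - x) * (1 / ((1 - z\<^sup>2) * sqrt (1 - z\<^sup>2)))"
    by (rule MVT2[OF assms(5)], rule gg_deriv) (use assms in auto)
  then obtain z where z: "x < z" "z < y" "gg y - gg x = (y - x) * (1 / ((1 - z\<^sup>2) * sqrt (1 - z\<^sup>2)))"
    by blast
  have zr: "\<bar>z\<bar> \<le> r" using z assms by auto
  have e: "\<bar>gg y - gg x\<bar> = \<bar>1 / ((1 - z\<^sup>2) * sqrt (1 - z\<^sup>2))\<bar> * \<bar>y - x\<bar>"
    by (simp only: z(3) abs_mult mult.commute)
  from deriv_bound[OF assms(1,2) zr] show ?thesis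
    unfolding e by (rule mult_right_mono) simp
qed

lemma gg_lip:
  assumes "0 \<le> r" "r < 1" "\<bar>x\<bar> \<le> r" "\<bar>y\<bar> \<le> r"
  shows "\<bar>gg y - gg x\<bar> \<le> Lr r * \<bar>y - x\<bar>"
proof (cases x y rule: linorder_cases)
  case less then show ?thesis using gg_lip_aux assms by blast
next
  case equal then show ?thesis by simp
next
  case greater then show ?thesis using gg_lip_aux[OF assms(1,2,4,3)] by (simp add: abs_minus_commute)
qed

lemma Lr_pos: "0 \<le> r \<Longrightarrow> r < 1 \<Longrightarrow> 0 < Lr r"
  unfolding Lr_def by (simp add: abs_square_less_1 power_less_one_iff)

definition GG :: "real \<Rightarrow> real \<Rightarrow> real" where "GG r x = gg (max (-r) (min r x))"

lemma GG_lip: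
  assumes "0 \<le> r" "r < 1"
  shows "\<bar>GG r y - GG r x\<bar> \<le> Lr r * \<bar>y - x\<bar>"
proof -
  have "\<bar>GG r y - GG r x\<bar> \<le> Lr r * \<bar>max (-r) (min r y) - max (-r) (min r x)\<bar>"
    unfolding GG_def using assms by (intro gg_lip) auto
  also have "\<dots> \<le> Lr r * \<bar>y - x\<bar>"
    using Lr_pos[OF assms] by (intro mult_left_mono) auto
  finally show ?thesis .
qed

lemma GG_cont: assumes "0 \<le> r" "r < 1" shows "continuous_on UNIV (GG r)"
proof -
  have "(Lr r)-lipschitz_on UNIV (GG r)"
    using GG_lip[OF assms] Lr_pos[OF assms] by (intro lipschitz_onI) (auto simp: dist_real_def)
  then show ?thesis by (rule lipschitz_on_continuous_on)
qed

lemma GG_eq: "\<bar>x\<bar> \<le> r \<Longrightarrow> GG r x = gg x"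
  unfolding GG_def by (simp add: abs_le_iff)

lemma gg_nonneg: "0 \<le> x \<Longrightarrow> x < 1 \<Longrightarrow> 0 \<le> gg x"
  unfolding gg_def by (intro divide_nonneg_nonneg) (auto simp: abs_square_le_1)
lemma gg_nonpos: "x \<le> 0 \<Longrightarrow> -1 < x \<Longrightarrow> gg x \<le> 0"
  unfolding gg_def by (intro divide_nonpos_nonneg) (auto simp: abs_square_le_1)



lemma cos_lip: "\<bar>cos x - cos y\<bar> \<le> \<bar>x - y\<bar>" for x y :: real
proof -
  have *: "\<bar>cos b - cos a\<bar> \<le> \<bar>b - a\<bar>" if "a < b" for a b :: real
  proof -
    have "\<exists>z. a < z \<and> z < b \<and> cos b - cos a = (b - a) * (- sin z)"
      by (rule MVT2[OF that]) (auto intro!: derivative_eq_intros)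
    then obtain z where z: "a < z" "z < b" "cos b - cos a = (b - a) * (- sin z)" by blast
    have "\<bar>(b - a) * (- sin z)\<bar> \<le> \<bar>b - a\<bar> * 1"
      unfolding abs_mult by (intro mult_left_mono) auto
    then show ?thesis using z by simp
  qed
  show ?thesis
    using *[of x y] *[of y x] by (cases x y rule: linorder_cases) (auto simp: abs_minus_commute)
qed

definition cl :: "real \<Rightarrow> real \<Rightarrow> real" where "cl T t = max 0 (min T t)"
definition wt :: "real \<Rightarrow> real \<Rightarrow> real \<Rightarrow> real" where "wt K T t = exp (K * (T - t))"

lemma cl_in: "0 \<le> T \<Longrightarrow> cl T t \<in> {0..T}" unfolding cl_def by auto
lemma cl_id: "t \<in> {0..T} \<Longrightarrow> cl T t = t" unfolding cl_def by auto
lemma cl_cont: "continuous_on UNIV (cl T)" unfolding cl_def by (intro continuous_intros)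

lemma bcontfun_cl:
  assumes "0 \<le> T" "continuous_on {0..T} f"
  shows "(\<lambda>t. f (cl T t)) \<in> bcontfun"
proof -
  have c: "continuous_on UNIV (\<lambda>t. f (cl T t))"
    by (rule continuous_on_compose2[OF assms(2) cl_cont]) (use cl_in[OF assms(1)] in auto)
  have "range (\<lambda>t. f (cl T t)) \<subseteq> f ` {0..T}" using cl_in[OF assms(1)] by auto
  moreover have "bounded (f ` {0..T})"
    by (intro compact_imp_bounded compact_continuous_image assms) auto
  ultimately have "bounded (range (\<lambda>t. f (cl T t)))" by (rule bounded_subset[rotated])
  with c show ?thesis unfolding bcontfun_def by simp
qed

lemma wt_ge1: "0 \<le> K \<Longrightarrow> t \<le> T \<Longrightarrow> 1 \<le> wt K T t"
  unfolding wt_def by simp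
lemma wt_pos: "0 < wt K T t" unfolding wt_def by simp

lemma bound_has_integral:
  assumes "s \<le> T" "0 < K"
  shows "((\<lambda>r. A + B * wt K T r) has_integral (A * (T - s) + B * (wt K T s - 1) / K)) {s..T}"
proof -
  have "((\<lambda>r. A + B * wt K T r) has_integral
     ((A * T - B * wt K T T / K) - (A * s - B * wt K T s / K))) {s..T}"
    apply (rule fundamental_theorem_of_calculus[OF assms(1)])
    unfolding wt_def has_real_derivative_iff_has_vector_derivative[symmetric]
    using assms(2) by (auto intro!: derivative_eq_intros simp: field_simps)
  moreover have "(A * T - B * wt K T T / K) - (A * s - B * wt K T s / K) = A * (T - s) + B * (wt K T s - 1) / K"
  proof -
    have w1: "wt K T T = 1" unfolding wt_def by simp
    have "B * (wt K T s - 1) / K = B * wt K T s / K - B / K"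
      by (simp add: right_diff_distrib diff_divide_distrib)
    then show ?thesis using w1 by (simp add: algebra_simps)
  qed
  ultimately show ?thesis by simp
qed

lemma integral_bound:
  assumes "0 \<le> s" "s \<le> T" "0 < K" "0 \<le> A" "0 \<le> B" "continuous_on {s..T} f"
    and "\<And>r. r \<in> {s..T} \<Longrightarrow> \<bar>f r\<bar> \<le> A + B * wt K T r"
  shows "\<bar>integral {s..T} f\<bar> \<le> A * T + B * wt K T s / K"
proof -
  note h = bound_has_integral[OF assms(2,3), of A B]
  have "\<bar>integral {s..T} f\<bar> \<le> integral {s..T} (\<lambda>r. A + B * wt K T r)"
    using integral_norm_bound_integral[OF integrable_continuous_real[OF assms(6)] has_integral_integrable[OF h]] assms(7)
    by simp
  also have "\<dots> = A * (T - s) + B * (wt K T s - 1) / K" using h by (rule integral_unique)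
  also have "\<dots> \<le> A * T + B * wt K T s / K"
    using assms by (intro add_mono mult_left_mono divide_right_mono) auto
  finally show ?thesis .
qed



definition vv :: "real \<Rightarrow> real \<Rightarrow> real \<Rightarrow> (real \<Rightarrow> real) \<Rightarrow> real \<Rightarrow> real" where
  "vv T \<beta> a u t = a - \<beta> * integral {t..T} (\<lambda>s. cos (u s))"
definition PHI :: "real \<Rightarrow> real \<Rightarrow> real \<Rightarrow> real \<Rightarrow> (real \<Rightarrow> real) \<Rightarrow> real \<Rightarrow> real" where
  "PHI T \<beta> r a u t = GG r a - integral {t..T} (\<lambda>s. GG r (vv T \<beta> a u s))"

lemma vv_cont:
  assumes "continuous_on UNIV u"
  shows "continuous_on {0..T} (vv T \<beta> a u)"
proof -
  have "continuous_on {0..T} (\<lambda>s. cos (u s))"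
    by (intro continuous_intros continuous_on_subset[OF assms]) auto
  then have "continuous_on {0..T} (\<lambda>x. integral {x..T} (\<lambda>s. cos (u s)))"
    by (intro indefinite_integral_continuous_1' integrable_continuous_real)
  then show ?thesis unfolding vv_def by (intro continuous_intros)
qed

lemma GGvv_cont:
  assumes "continuous_on UNIV u" "0 \<le> r" "r < 1"
  shows "continuous_on {0..T} (\<lambda>s. GG r (vv T \<beta> a u s))"
  by (rule continuous_on_compose2[OF GG_cont[OF assms(2,3)] vv_cont[OF assms(1)]]) auto

lemma PHI_cont:
  assumes "continuous_on UNIV u" "0 \<le> r" "r < 1"
  shows "continuous_on {0..T} (PHI T \<beta> r a u)"
proof -
  have "continuous_on {0..T} (\<lambda>x. integral {x..T} (\<lambda>s. GG r (vv T \<beta> a u s)))"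
    by (intro indefinite_integral_continuous_1' integrable_continuous_real GGvv_cont assms)
  then show ?thesis unfolding PHI_def by (intro continuous_intros)
qed

lemma vv_bound:
  assumes "continuous_on UNIV u" "t \<in> {0..T}"
  shows "\<bar>vv T \<beta> a u t - a\<bar> \<le> \<bar>\<beta>\<bar> * T"
proof -
  have c: "continuous_on {t..T} (\<lambda>s. cos (u s))"
    by (intro continuous_intros continuous_on_subset[OF assms(1)]) auto
  have "\<bar>integral {t..T} (\<lambda>s. cos (u s))\<bar> \<le> 1 * T + 0 * wt 1 T t / 1"
    by (rule integral_bound[OF _ _ _ _ _ c]) (use assms(2) in auto)
  then have "\<bar>\<beta>\<bar> * \<bar>integral {t..T} (\<lambda>s. cos (u s))\<bar> \<le> \<bar>\<beta>\<bar> * T"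
    by (intro mult_left_mono) auto
  then show ?thesis unfolding vv_def by (simp add: abs_mult)
qed

lemma vv_est:
  assumes "continuous_on UNIV u1" "continuous_on UNIV u2" "0 < K" "0 \<le> D"
    and "\<And>s. s \<in> {0..T} \<Longrightarrow> \<bar>u1 s - u2 s\<bar> \<le> D * wt K T s"
    and "s \<in> {0..T}"
  shows "\<bar>vv T \<beta> a u1 s - vv T \<beta> b u2 s\<bar> \<le> \<bar>a - b\<bar> + \<bar>\<beta>\<bar> * (D * wt K T s / K)"
proof -
  have c1: "continuous_on {s..T} (\<lambda>r. cos (u1 r))"
    by (intro continuous_intros continuous_on_subset[OF assms(1)]) auto
  have c2: "continuous_on {s..T} (\<lambda>r. cos (u2 r))"
    by (intro continuous_intros continuous_on_subset[OF assms(2)]) auto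
  have e: "vv T \<beta> a u1 s - vv T \<beta> b u2 s = (a - b) - \<beta> * integral {s..T} (\<lambda>r. cos (u1 r) - cos (u2 r))"
    unfolding vv_def
    by (simp add: integral_diff[OF integrable_continuous_real[OF c1] integrable_continuous_real[OF c2]]
       right_diff_distrib)
  have "\<bar>integral {s..T} (\<lambda>r. cos (u1 r) - cos (u2 r))\<bar> \<le> 0 * T + D * wt K T s / K"
  proof (rule integral_bound)
    show "continuous_on {s..T} (\<lambda>r. cos (u1 r) - cos (u2 r))" using c1 c2 by (rule continuous_on_diff)
    fix r assume r: "r \<in> {s..T}"
    have "\<bar>cos (u1 r) - cos (u2 r)\<bar> \<le> \<bar>u1 r - u2 r\<bar>" by (rule cos_lip)
    also have "\<dots> \<le> D * wt K T r" using assms(5) r assms(6) by auto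
    finally show "\<bar>cos (u1 r) - cos (u2 r)\<bar> \<le> 0 + D * wt K T r" by simp
  qed (use assms in auto)
  then have "\<bar>\<beta>\<bar> * \<bar>integral {s..T} (\<lambda>r. cos (u1 r) - cos (u2 r))\<bar> \<le> \<bar>\<beta>\<bar> * (D * wt K T s / K)"
    by (intro mult_left_mono) auto
  moreover have "\<bar>(a - b) - \<beta> * integral {s..T} (\<lambda>r. cos (u1 r) - cos (u2 r))\<bar> \<le>
     \<bar>a - b\<bar> + \<bar>\<beta>\<bar> * \<bar>integral {s..T} (\<lambda>r. cos (u1 r) - cos (u2 r))\<bar>"
    by (metis abs_mult abs_triangle_ineq4)
  ultimately show ?thesis unfolding e by linarith
qed

lemma PHI_est:
  assumes "continuous_on UNIV u1" "continuous_on UNIV u2" "0 < K" "0 \<le> D" "0 \<le> r" "r < 1"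
    and "\<And>s. s \<in> {0..T} \<Longrightarrow> \<bar>u1 s - u2 s\<bar> \<le> D * wt K T s"
    and "t \<in> {0..T}"
  shows "\<bar>PHI T \<beta> r a u1 t - PHI T \<beta> r b u2 t\<bar> \<le>
     \<bar>GG r a - GG r b\<bar> + Lr r * \<bar>a - b\<bar> * T + (Lr r * \<bar>\<beta>\<bar> * D / K) * wt K T t / K"
proof -
  have c1: "continuous_on {t..T} (\<lambda>s. GG r (vv T \<beta> a u1 s))"
    by (rule continuous_on_subset[OF GGvv_cont[OF assms(1,5,6)]]) (use assms in auto)
  have c2: "continuous_on {t..T} (\<lambda>s. GG r (vv T \<beta> b u2 s))"
    by (rule continuous_on_subset[OF GGvv_cont[OF assms(2,5,6)]]) (use assms in auto)
  have e: "PHI T \<beta> r a u1 t - PHI T \<beta> r b u2 t = (GG r a - GG r b) -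
      integral {t..T} (\<lambda>s. GG r (vv T \<beta> a u1 s) - GG r (vv T \<beta> b u2 s))"
    unfolding PHI_def
    by (simp add: integral_diff[OF integrable_continuous_real[OF c1] integrable_continuous_real[OF c2]])
  have L: "0 < Lr r" using Lr_pos assms by auto
  have "\<bar>integral {t..T} (\<lambda>s. GG r (vv T \<beta> a u1 s) - GG r (vv T \<beta> b u2 s))\<bar>
     \<le> Lr r * \<bar>a - b\<bar> * T + (Lr r * \<bar>\<beta>\<bar> * D / K) * wt K T t / K"
  proof (rule integral_bound)
    show "continuous_on {t..T} (\<lambda>s. GG r (vv T \<beta> a u1 s) - GG r (vv T \<beta> b u2 s))"
      using c1 c2 by (rule continuous_on_diff)
    fix s assume s: "s \<in> {t..T}"
    then have s0: "s \<in> {0..T}" using assms by auto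
    have "\<bar>GG r (vv T \<beta> a u1 s) - GG r (vv T \<beta> b u2 s)\<bar> \<le> Lr r * \<bar>vv T \<beta> a u1 s - vv T \<beta> b u2 s\<bar>"
      by (rule GG_lip[OF assms(5,6)])
    also have "\<dots> \<le> Lr r * (\<bar>a - b\<bar> + \<bar>\<beta>\<bar> * (D * wt K T s / K))"
      by (intro mult_left_mono vv_est[OF assms(1-4) assms(7) s0]) (use L in auto)
    also have "\<dots> = Lr r * \<bar>a - b\<bar> + Lr r * \<bar>\<beta>\<bar> * D / K * wt K T s"
      by (simp add: algebra_simps)
    finally show "\<bar>GG r (vv T \<beta> a u1 s) - GG r (vv T \<beta> b u2 s)\<bar> \<le> Lr r * \<bar>a - b\<bar> + Lr r * \<bar>\<beta>\<bar> * D / K * wt K T s" .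
  qed (use assms L in auto)
  moreover have "\<bar>(GG r a - GG r b) - integral {t..T} (\<lambda>s. GG r (vv T \<beta> a u1 s) - GG r (vv T \<beta> b u2 s))\<bar>
     \<le> \<bar>GG r a - GG r b\<bar> + \<bar>integral {t..T} (\<lambda>s. GG r (vv T \<beta> a u1 s) - GG r (vv T \<beta> b u2 s))\<bar>"
    by (rule abs_triangle_ineq4)
  ultimately show ?thesis unfolding e by linarith
qed



definition uY :: "real \<Rightarrow> real \<Rightarrow> (real \<Rightarrow>\<^sub>C real) \<Rightarrow> real \<Rightarrow> real" where
  "uY K T Y = (\<lambda>s. wt K T s * apply_bcontfun Y s)"
definition PSI :: "real \<Rightarrow> real \<Rightarrow> real \<Rightarrow> real \<Rightarrow> real \<Rightarrow> (real \<Rightarrow>\<^sub>C real) \<Rightarrow> (real \<Rightarrow>\<^sub>C real)" where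
  "PSI T \<beta> r K a Y = Bcontfun (\<lambda>t. PHI T \<beta> r a (uY K T Y) (cl T t) / wt K T (cl T t))"

lemma uY_cont: "continuous_on UNIV (uY K T Y)"
  unfolding uY_def wt_def by (intro continuous_intros continuous_on_apply_bcontfun)

lemma PSI_apply:
  assumes "0 \<le> T" "0 \<le> r" "r < 1"
  shows "apply_bcontfun (PSI T \<beta> r K a Y) t = PHI T \<beta> r a (uY K T Y) (cl T t) / wt K T (cl T t)"
proof -
  have "continuous_on {0..T} (\<lambda>t. PHI T \<beta> r a (uY K T Y) t / wt K T t)"
    by (intro continuous_on_divide PHI_cont uY_cont assms) (auto simp: wt_def intro!: continuous_intros)
  from bcontfun_cl[OF assms(1) this] show ?thesis
    unfolding PSI_def by (simp add: Bcontfun_inverse)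
qed

lemma PSI_contr:
  assumes "0 \<le> T" "0 \<le> r" "r < 1" "K = 1 + 2 * Lr r * \<bar>\<beta>\<bar>"
  shows "dist (PSI T \<beta> r K a Y1) (PSI T \<beta> r K b Y2) \<le>
     \<bar>GG r a - GG r b\<bar> + Lr r * \<bar>a - b\<bar> * T + dist Y1 Y2 / 2"
proof (rule dist_bound)
  fix t
  define c where "c = cl T t"
  have c: "c \<in> {0..T}" unfolding c_def using cl_in assms by auto
  define D where "D = dist Y1 Y2"
  have D: "0 \<le> D" unfolding D_def by simp
  have L: "0 < Lr r" using Lr_pos assms by auto
  have K: "1 \<le> K" using assms L by auto
  have ud: "\<bar>uY K T Y1 s - uY K T Y2 s\<bar> \<le> D * wt K T s" for s
  proof -
    have "\<bar>apply_bcontfun Y1 s - apply_bcontfun Y2 s\<bar> \<le> D"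
      using dist_bounded[of Y1 s Y2] unfolding D_def dist_real_def .
    then have "wt K T s * \<bar>apply_bcontfun Y1 s - apply_bcontfun Y2 s\<bar> \<le> wt K T s * D"
      using wt_pos by (intro mult_left_mono) (auto simp: less_imp_le)
    moreover have "uY K T Y1 s - uY K T Y2 s = wt K T s * (apply_bcontfun Y1 s - apply_bcontfun Y2 s)"
      unfolding uY_def by (simp add: right_diff_distrib)
    moreover have "\<bar>wt K T s\<bar> = wt K T s" using wt_pos[of K T s] by simp
    ultimately show ?thesis by (simp add: abs_mult mult.commute)
  qed
  define A where "A = \<bar>GG r a - GG r b\<bar> + Lr r * \<bar>a - b\<bar> * T"
  define C where "C = Lr r * \<bar>\<beta>\<bar> * D / K"
  have est: "\<bar>PHI T \<beta> r a (uY K T Y1) c - PHI T \<beta> r b (uY K T Y2) c\<bar> \<le> A + C * wt K T c / K"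
    unfolding A_def C_def
    by (rule PHI_est[OF uY_cont uY_cont _ D assms(2,3) _ c]) (use K ud in auto)
  have A0: "0 \<le> A" unfolding A_def using L assms by auto
  have C0: "0 \<le> C" unfolding C_def using L D K by auto
  have w1: "1 \<le> wt K T c" using wt_ge1 K c by auto
  have "dist (PHI T \<beta> r a (uY K T Y1) c / wt K T c) (PHI T \<beta> r b (uY K T Y2) c / wt K T c)
      = \<bar>PHI T \<beta> r a (uY K T Y1) c - PHI T \<beta> r b (uY K T Y2) c\<bar> / wt K T c"
    using w1 by (simp add: dist_real_def diff_divide_distrib[symmetric])
  also have "\<dots> \<le> (A + C * wt K T c / K) / wt K T c"
    using w1 est by (intro divide_right_mono) auto
  also have "\<dots> = A / wt K T c + C / K"
    using w1 by (simp add: add_divide_distrib)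
  also have "\<dots> \<le> A + C / K"
    using w1 A0 by (simp add: divide_le_eq mult_le_cancel_left1)
  also have "C / K \<le> D / 2"
  proof -
    have "Lr r * \<bar>\<beta>\<bar> \<le> K / 2" using assms by simp
    then have "Lr r * \<bar>\<beta>\<bar> * D \<le> K / 2 * D" using D by (rule mult_right_mono)
    then have "C \<le> (K / 2 * D) / K" unfolding C_def using K by (intro divide_right_mono) auto
    also have "(K / 2 * D) / K = D / 2" using K by simp
    finally have "C \<le> D / 2" .
    then have "C / K \<le> D / 2 / K" using K by (intro divide_right_mono) auto
    also have "D / 2 / K \<le> D / 2 / 1" using K D by (intro divide_left_mono) auto
    finally show ?thesis by simp
  qed
  finally show "dist (apply_bcontfun (PSI T \<beta> r K a Y1) t) (apply_bcontfun (PSI T \<beta> r K b Y2) t)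
    \<le> \<bar>GG r a - GG r b\<bar> + Lr r * \<bar>a - b\<bar> * T + dist Y1 Y2 / 2"
    unfolding PSI_apply[OF assms(1-3)] c_def[symmetric] A_def D_def by simp
qed



lemma PHI_deriv:
  assumes "continuous_on UNIV u" "0 \<le> r" "r < 1" "t \<in> {0..T}"
  shows "(PHI T \<beta> r a u has_real_derivative GG r (vv T \<beta> a u t)) (at t within {0..T})"
proof -
  have "((\<lambda>x. integral {x..T} (\<lambda>s. GG r (vv T \<beta> a u s))) has_real_derivative - GG r (vv T \<beta> a u t)) (at t within {0..T})"
    by (rule integral_has_real_derivative'[OF GGvv_cont[OF assms(1-3)] assms(4)])
  then have "((\<lambda>x. GG r a - integral {x..T} (\<lambda>s. GG r (vv T \<beta> a u s))) has_real_derivative 0 - - GG r (vv T \<beta> a u t)) (at t within {0..T})"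
    by (intro DERIV_diff DERIV_const)
  then show ?thesis unfolding PHI_def by simp
qed

lemma vv_deriv:
  assumes "continuous_on UNIV u" "t \<in> {0..T}"
  shows "(vv T \<beta> a u has_real_derivative \<beta> * cos (u t)) (at t within {0..T})"
proof -
  have c: "continuous_on {0..T} (\<lambda>s. cos (u s))"
    by (intro continuous_intros continuous_on_subset[OF assms(1)]) auto
  have "((\<lambda>x. integral {x..T} (\<lambda>s. cos (u s))) has_real_derivative - cos (u t)) (at t within {0..T})"
    by (rule integral_has_real_derivative'[OF c assms(2)])
  then have "((\<lambda>x. a - \<beta> * integral {x..T} (\<lambda>s. cos (u s))) has_real_derivative 0 - \<beta> * - cos (u t)) (at t within {0..T})"
    by (intro DERIV_diff DERIV_const DERIV_cmult)
  then show ?thesis unfolding vv_def by simp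
qed

lemma transf:
  assumes "(f has_real_derivative D) (at t within S)" "t \<in> S" "\<And>x. x \<in> S \<Longrightarrow> f x = g x"
  shows "(g has_real_derivative D) (at t within S)"
  using has_field_derivative_transform_within[OF assms(1) zero_less_one assms(2)] assms(3) by blast

theorem mainTheorem9:
  fixes T \<beta> :: real
  assumes "T > 0" and "\<bar>\<beta>\<bar> < 1 / (2 * T)"
  shows "\<exists>u. is_solution T \<beta> u"
proof -
  define m where "m = \<bar>\<beta>\<bar> * T"
  define r where "r = 2 * m"
  have m0: "0 \<le> m" unfolding m_def using assms by simp
  have "\<bar>\<beta>\<bar> * (2 * T) < 1" using assms by (simp add: less_divide_eq)
  then have r1: "r < 1" unfolding r_def m_def by (simp add: algebra_simps)
  have r0: "0 \<le> r" unfolding r_def using m0 by simp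
  have T0: "0 \<le> T" using assms by simp
  define K where "K = 1 + 2 * Lr r * \<bar>\<beta>\<bar>"
  note contr = PSI_contr[OF T0 r0 r1 K_def]
  have "\<forall>a. \<exists>Y. PSI T \<beta> r K a Y = Y"
  proof
    fix a
    have "\<exists>!Y. PSI T \<beta> r K a Y = Y"
      by (rule banach_fix_type[of "1/2"]) (use contr[of a _ a] in auto)
    then show "\<exists>Y. PSI T \<beta> r K a Y = Y" by blast
  qed
  then obtain Yf where Yf: "\<And>a. PSI T \<beta> r K a (Yf a) = Yf a" by metis
  define U where "U a = uY K T (Yf a)" for a
  have Ucont: "continuous_on UNIV (U a)" for a unfolding U_def by (rule uY_cont)
  have Ufix: "U a t = PHI T \<beta> r a (U a) t" if "t \<in> {0..T}" for a t
  proof -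
    have "apply_bcontfun (Yf a) t = PHI T \<beta> r a (U a) t / wt K T t"
      using PSI_apply[OF T0 r0 r1, of \<beta> K a "Yf a" t] Yf[of a] cl_id[OF that] unfolding U_def by simp
    then show ?thesis unfolding U_def uY_def using wt_pos[of K T t] by simp
  qed
  have Lp: "0 < Lr r" using Lr_pos r0 r1 by auto
  have Ulip: "\<bar>U a 0 - U b 0\<bar> \<le> wt K T 0 * (2 * (Lr r + Lr r * T)) * \<bar>a - b\<bar>" for a b
  proof -
    have "dist (Yf a) (Yf b) \<le> \<bar>GG r a - GG r b\<bar> + Lr r * \<bar>a - b\<bar> * T + dist (Yf a) (Yf b) / 2"
      using contr[of a "Yf a" b "Yf b"] Yf[of a] Yf[of b] by simp
    moreover have "\<bar>GG r a - GG r b\<bar> \<le> Lr r * \<bar>a - b\<bar>" using GG_lip[OF r0 r1, of a b] by simp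
    ultimately have "dist (Yf a) (Yf b) \<le> 2 * (Lr r + Lr r * T) * \<bar>a - b\<bar>"
      by (simp add: algebra_simps)
    moreover have "\<bar>apply_bcontfun (Yf a) 0 - apply_bcontfun (Yf b) 0\<bar> \<le> dist (Yf a) (Yf b)"
      using dist_bounded[of "Yf a" 0 "Yf b"] by (simp add: dist_real_def)
    ultimately have d: "\<bar>apply_bcontfun (Yf a) 0 - apply_bcontfun (Yf b) 0\<bar> \<le> 2 * (Lr r + Lr r * T) * \<bar>a - b\<bar>"
      by linarith
    have "\<bar>U a 0 - U b 0\<bar> = wt K T 0 * \<bar>apply_bcontfun (Yf a) 0 - apply_bcontfun (Yf b) 0\<bar>"
      unfolding U_def uY_def using wt_pos[of K T 0] by (simp add: abs_mult right_diff_distrib[symmetric])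
    also have "\<dots> \<le> wt K T 0 * (2 * (Lr r + Lr r * T) * \<bar>a - b\<bar>)"
      using d wt_pos[of K T 0] by (intro mult_left_mono) auto
    finally show ?thesis by (simp add: mult.assoc)
  qed
  have U0cont: "continuous_on UNIV (\<lambda>a. U a 0)"
  proof (rule lipschitz_on_continuous_on)
    show "(wt K T 0 * (2 * (Lr r + Lr r * T)))-lipschitz_on UNIV (\<lambda>a. U a 0)"
      using Ulip Lp wt_pos[of K T 0] T0 by (intro lipschitz_onI) (auto simp: dist_real_def)
  qed
  define h where "h a = GG r a - U a 0" for a
  have hcont: "continuous_on {-m..m} h"
    unfolding h_def by (intro continuous_on_diff continuous_on_subset[OF GG_cont[OF r0 r1]]
        continuous_on_subset[OF U0cont]) auto
  have h_int: "h a = integral {0..T} (\<lambda>s. GG r (vv T \<beta> a (U a) s))" for a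
    using Ufix[of 0 a] T0 unfolding h_def PHI_def by simp
  have vvr: "\<bar>vv T \<beta> a (U a) s\<bar> \<le> r" "a - m \<le> vv T \<beta> a (U a) s" "vv T \<beta> a (U a) s \<le> a + m"
    if "s \<in> {0..T}" "\<bar>a\<bar> \<le> m" for a s
    using vv_bound[OF Ucont that(1), of \<beta> a a] that unfolding r_def m_def by auto
  have intc: "(\<lambda>s. GG r (vv T \<beta> a (U a) s)) integrable_on {0..T}" for a
    by (intro integrable_continuous_real GGvv_cont Ucont r0 r1)
  have hm: "0 \<le> h m"
    unfolding h_int
  proof (rule integral_nonneg[OF intc])
    fix s assume s: "s \<in> {0..T}"
    have "\<bar>m\<bar> \<le> m" using m0 by simp
    note v = vvr[OF s this]
    show "0 \<le> GG r (vv T \<beta> m (U m) s)"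
      using v r1 by (simp add: GG_eq gg_nonneg)
  qed
  have hmm: "h (-m) \<le> 0"
  proof -
    have "0 \<le> integral {0..T} (\<lambda>s. - GG r (vv T \<beta> (-m) (U (-m)) s))"
    proof (rule integral_nonneg)
      show "(\<lambda>s. - GG r (vv T \<beta> (-m) (U (-m)) s)) integrable_on {0..T}"
        using intc by (rule integrable_neg)
      fix s assume s: "s \<in> {0..T}"
      have "\<bar>-m\<bar> \<le> m" using m0 by simp
      note v = vvr[OF s this]
      have "-1 < vv T \<beta> (-m) (U (-m)) s" using v r1 by auto
      then show "0 \<le> - GG r (vv T \<beta> (-m) (U (-m)) s)"
        using v r1 by (simp add: GG_eq gg_nonpos)
    qed
    then show ?thesis unfolding h_int by (simp add: integral_neg)
  qed
  obtain a where a: "-m \<le> a" "a \<le> m" "h a = 0"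
    using IVT'[of h "-m" 0 m, OF hmm hm _ hcont] m0 by auto
  have am: "\<bar>a\<bar> \<le> m" using a by auto
  define u where "u = U a"
  define du where "du t = GG r (vv T \<beta> a u t)" for t
  define dphi where "dphi t = \<beta> * cos (u t)" for t
  have uc: "continuous_on UNIV u" unfolding u_def by (rule Ucont)
  show ?thesis
    unfolding is_solution_def
  proof (intro exI conjI ballI)
    show "continuous_on {0..T} du" unfolding du_def by (rule GGvv_cont[OF uc r0 r1])
    show "continuous_on {0..T} dphi" unfolding dphi_def
      by (intro continuous_intros continuous_on_subset[OF uc]) auto
    fix t assume t: "t \<in> {0..T}"
    show "(u has_real_derivative du t) (at t within {0..T})"
      unfolding du_def
      by (rule transf[OF PHI_deriv[OF uc r0 r1 t] t]) (simp add: u_def Ufix)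
    show "((\<lambda>s. du s / sqrt (1 + (du s)\<^sup>2)) has_real_derivative dphi t) (at t within {0..T})"
      unfolding dphi_def
    proof (rule transf[OF vv_deriv[OF uc t] t])
      fix x assume x: "x \<in> {0..T}"
      have v: "\<bar>vv T \<beta> a u x\<bar> \<le> r" using vvr(1)[OF x am] unfolding u_def .
      then have "du x = gg (vv T \<beta> a u x)" unfolding du_def by (rule GG_eq)
      moreover have "\<bar>vv T \<beta> a u x\<bar> < 1" using v r1 by simp
      ultimately show "vv T \<beta> a u x = du x / sqrt (1 + (du x)\<^sup>2)" using phi_gg by simp
    qed
    show "dphi t = \<beta> * cos (u t)" unfolding dphi_def ..
  next
    have uT: "u T = GG r a" using Ufix[of T a] T0 unfolding u_def PHI_def by simp
    have u0: "u 0 = GG r a" using a(3) unfolding h_def u_def by simp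
    show "u 0 = u T" using uT u0 by simp
    show "u T = du T" using uT unfolding du_def vv_def by simp
  qed
qed


end
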